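(* Assume $\Omega^*\neq\emptyset$, let $\sigma\in[0,c]$, and let an initial point $\omega_0=(Z_0,E_0,-\lambda_0)$ be given. Then there exist parameters $(W_k,\theta_k,\beta_k)\in\mathcal{S}(\sigma,A)$, $k\ge0$, such that the sequence $\{\omega_k\}$ generated by the iteration below converges to a solution $\omega^*\in\Omega^*$.
   Context: Let $A\in\mathbb{R}^{m\times d}$, $X\in\mathbb{R}^{m\times n}$, and let $f:\mathbb{R}^{d\times n}\to\mathbb{R}$, $g:\mathbb{R}^{m\times n}\to\mathbb{R}$ be convex. Consider the problem $\min_{Z,E} f(Z)+g(E)$ subject to $X=AZ+E$. Triples are written $\omega=(Z,E,-\lambda)$ with $\lambda\in\mathbb{R}^{m\times n}$ a Lagrange multiplier. $\Omega^*$ is the solution set: the set of $\omega^*=(Z^*,E^*,-\lambda^* )$ with $0\in\partial f(Z^* )+A^\top\lambda^*$, $0\in\partial g(E^* )+\lambda^*$, $AZ^*+E^*=X$. $\circ$ is the Hadamard product; $\beta^{-1}$ is the entrywise reciprocal; $\tfrac{\theta}{2}\circ\|M\|_F^2:=\tfrac12\sum_{ij}\theta_{ij}M_{ij}^2$. Iteration (D-LADMM), with parameters $W_k\in\mathbb{R}^{m\times d}$, $\theta_k\in\mathbb{R}^{d\times n}$, $\beta_k\in\mathbb{R}^{m\times n}$: $Z_{k+1}=\arg\min_Z\{ f(Z)+\tfrac{\theta_k}{2}\circ\|Z-Z_k+\theta_k^{-1}\circ W_k^\top(\lambda_k+\beta_k\circ(AZ_k+E_k-X))\|_F^2\}$,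 $E_{k+1}=\arg\min_E\{g(E)+\tfrac{\beta_k}{2}\circ\|E-X+AZ_{k+1}+\beta_k^{-1}\circ\lambda_k\|_F^2\}$, $\lambda_{k+1}=\lambda_k+\beta_k\circ(AZ_{k+1}+E_{k+1}-X)$. $\mathcal{S}(\sigma,A)$ is the set of $(W,\theta,\beta)$ with $\|W-A\|\le\sigma$ (spectral norm), $\theta,\beta$ entrywise positive, and $Z\mapsto\theta\circ Z-W^\top(\beta\circ(AZ))$ positive definite ($\langle\cdot(Z),Z\rangle>0$ for $Z\neq0$). Standing assumption: there is a constant $c$ such that $\mathcal{S}(\sigma,A)\ne\emptyset$ for all $0\le\sigma\le c$. *)

theory Defs
  imports "HOL-Analysis.Analysis"
begin

text \<open>Matrices are rendered as real^'c^'r (rows indexed by 'r, columns by 'c).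
  Frobenius inner product = the library inner product on nested vectors.\<close>

definition hprod :: "real^'c^'r \<Rightarrow> real^'c^'r \<Rightarrow> real^'c^'r" where
  "hprod a b = (\<chi> i j. a$i$j * b$i$j)"

definition hinv :: "real^'c^'r \<Rightarrow> real^'c^'r" where
  "hinv a = (\<chi> i j. inverse (a$i$j))"

definition wsq :: "real^'c^'r \<Rightarrow> real^'c^'r \<Rightarrow> real" where
  "wsq \<theta> M = (1/2) * (\<Sum>i\<in>UNIV. \<Sum>j\<in>UNIV. \<theta>$i$j * (M$i$j)^2)"

definition subdiff :: "('a::real_inner \<Rightarrow> real) \<Rightarrow> 'a \<Rightarrow> 'a set" where
  "subdiff f x = {G. \<forall>y. f y \<ge> f x + inner G (y - x)}"

definition spec_norm :: "real^'c^'r \<Rightarrow> real" where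
  "spec_norm M = onorm (\<lambda>x. M *v x)"

definition is_argmin :: "('a \<Rightarrow> real) \<Rightarrow> 'a \<Rightarrow> bool" where
  "is_argmin \<phi> x \<longleftrightarrow> (\<forall>y. \<phi> x \<le> \<phi> y)"

definition S_set :: "real \<Rightarrow> real^'d^'m \<Rightarrow> ((real^'d^'m) \<times> (real^'n^'d) \<times> (real^'n^'m)) set" where
  "S_set \<sigma> A = {(W, \<theta>, \<beta>). spec_norm (W - A) \<le> \<sigma>
      \<and> (\<forall>i j. \<theta>$i$j > 0) \<and> (\<forall>i j. \<beta>$i$j > 0)
      \<and> (\<forall>Z. Z \<noteq> 0 \<longrightarrow> inner (hprod \<theta> Z - transpose W ** hprod \<beta> (A ** Z)) Z > 0)}"

definition Omega_star :: "(real^'n^'d \<Rightarrow> real) \<Rightarrow> (real^'n^'m \<Rightarrow> real) \<Rightarrow> real^'d^'m \<Rightarrow> real^'n^'m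
    \<Rightarrow> ((real^'n^'d) \<times> (real^'n^'m) \<times> (real^'n^'m)) set" where
  "Omega_star f g A X = {(Z, E, - lam) | Z E lam.
      - (transpose A ** lam) \<in> subdiff f Z \<and> - lam \<in> subdiff g E \<and> A ** Z + E = X}"

definition dladmm_seq ::
  "(real^'n^'d \<Rightarrow> real) \<Rightarrow> (real^'n^'m \<Rightarrow> real) \<Rightarrow> real^'d^'m \<Rightarrow> real^'n^'m
   \<Rightarrow> (nat \<Rightarrow> real^'d^'m) \<Rightarrow> (nat \<Rightarrow> real^'n^'d) \<Rightarrow> (nat \<Rightarrow> real^'n^'m)
   \<Rightarrow> (nat \<Rightarrow> real^'n^'d) \<Rightarrow> (nat \<Rightarrow> real^'n^'m) \<Rightarrow> (nat \<Rightarrow> real^'n^'m) \<Rightarrow> bool" where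
  "dladmm_seq f g A X W \<theta> \<beta> Z E lam \<longleftrightarrow> (\<forall>k.
     is_argmin (\<lambda>Y. f Y + wsq (\<theta> k) (Y - Z k + hprod (hinv (\<theta> k))
          (transpose (W k) ** (lam k + hprod (\<beta> k) (A ** Z k + E k - X))))) (Z (Suc k))
   \<and> is_argmin (\<lambda>Y. g Y + wsq (\<beta> k) (Y - X + A ** Z (Suc k) + hprod (hinv (\<beta> k)) (lam k))) (E (Suc k))
   \<and> lam (Suc k) = lam k + hprod (\<beta> k) (A ** Z (Suc k) + E (Suc k) - X))"

end

theory Submission
  imports Defs
begin

lemma mm_linear: "linear (\<lambda>Z::real^'c^'b. (A::real^'b^'a) ** Z)"
  by (rule linearI) (auto simp: matrix_add_ldistrib matrix_matrix_mult_def vec_eq_iff sum_distrib_left algebra_simps sum.distrib)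

lemma sum3_swap: "(\<Sum>i\<in>I. \<Sum>a\<in>J. \<Sum>j\<in>K. F i a j) = (\<Sum>j\<in>K. \<Sum>a\<in>J. \<Sum>i\<in>I. F i a j)"
proof -
  have "(\<Sum>i\<in>I. \<Sum>a\<in>J. \<Sum>j\<in>K. F i a j) = (\<Sum>i\<in>I. \<Sum>j\<in>K. \<Sum>a\<in>J. F i a j)"
    by (rule sum.cong[OF refl], rule sum.swap)
  also have "\<dots> = (\<Sum>j\<in>K. \<Sum>i\<in>I. \<Sum>a\<in>J. F i a j)" by (rule sum.swap)
  also have "\<dots> = (\<Sum>j\<in>K. \<Sum>a\<in>J. \<Sum>i\<in>I. F i a j)" by (rule sum.cong[OF refl], rule sum.swap)
  finally show ?thesis .
qed

lemma mm_adj: "inner (transpose (A::real^'b^'a) ** Y) (Z::real^'c^'b) = inner Y (A ** Z)"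
proof -
  have "inner (transpose A ** Y) Z = (\<Sum>i\<in>UNIV. \<Sum>a\<in>UNIV. \<Sum>j\<in>UNIV. A$j$i * Y$j$a * Z$i$a)"
    by (simp add: inner_vec_def matrix_matrix_mult_def transpose_def sum_distrib_right)
  also have "\<dots> = (\<Sum>j\<in>UNIV. \<Sum>a\<in>UNIV. \<Sum>i\<in>UNIV. A$j$i * Y$j$a * Z$i$a)" by (rule sum3_swap)
  also have "\<dots> = inner Y (A ** Z)"
    by (simp add: inner_vec_def matrix_matrix_mult_def sum_distrib_left algebra_simps)
  finally show ?thesis .
qed

lemma norm_sq_vec2: "norm (M::real^'c^'b)^2 = (\<Sum>i\<in>UNIV. \<Sum>j\<in>UNIV. (M$i$j)^2)"
  unfolding power2_norm_eq_inner by (simp add: inner_vec_def power2_eq_square)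

lemma wsq_const: "wsq (\<chi> i j. t) M = t/2 * norm M ^2"
  by (simp add: wsq_def norm_sq_vec2 sum_distrib_left)

lemma hprod_one: "hprod (\<chi> i j. 1) M = M"
  by (simp add: hprod_def vec_eq_iff)

lemma hprod_const: "hprod (\<chi> i j. t) M = t *\<^sub>R M"
  by (simp add: hprod_def vec_eq_iff)

lemma hinv_const: "hinv (\<chi> i j. t) = (\<chi> i j. inverse t)"
  by (simp add: hinv_def)

lemma subdiff_mono:
  assumes "p \<in> subdiff f x" "q \<in> subdiff f y"
  shows "inner (p - q) (x - y) \<ge> 0"
proof -
  have "f y \<ge> f x + inner p (y - x)" "f x \<ge> f y + inner q (x - y)"
    using assms by (auto simp: subdiff_def)
  then show ?thesis by (simp add: inner_diff_left inner_diff_right algebra_simps)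
qed

lemma small_le:
  fixes a b C :: real
  assumes "C \<ge> 0" "\<And>s. 0 < s \<Longrightarrow> s < 1 \<Longrightarrow> a \<le> b + s * C"
  shows "a \<le> b"
proof (rule ccontr)
  assume "\<not> a \<le> b"
  define s where "s = min (1/2) ((a - b) / (2 * (C + 1)))"
  have s0: "0 < s" "s < 1" using \<open>\<not> a \<le> b\<close> assms(1) by (auto simp: s_def)
  have "s * C \<le> ((a - b) / (2 * (C + 1))) * C" using assms(1) by (intro mult_right_mono) (auto simp: s_def)
  also have "\<dots> = (a - b) * (C / (2 * (C + 1)))" by simp
  also have "\<dots> < (a - b) * 1" using \<open>\<not> a \<le> b\<close> assms(1) by (intro mult_strict_left_mono) (auto simp: field_simps)
  also have "\<dots> = a - b" by simp
  finally show False using assms(2)[OF s0] by linarith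
qed

lemma argmin_subdiff:
  fixes f :: "'a::real_inner \<Rightarrow> real"
  assumes cf: "convex_on UNIV f" and t: "t > 0"
    and m: "\<And>y. f x + t/2 * norm (x - c)^2 \<le> f y + t/2 * norm (y - c)^2"
  shows "(- t) *\<^sub>R (x - c) \<in> subdiff f x"
  unfolding subdiff_def
proof (intro CollectI allI)
  fix y
  define d where "d = y - x"
  have "f x \<le> f y + t * inner (x - c) d + s * (t/2 * norm d ^2)" if s: "0 < s" "s < 1" for s
  proof -
    have eq: "x + s *\<^sub>R d = (1 - s) *\<^sub>R x + s *\<^sub>R y" by (simp add: d_def algebra_simps)
    have c1: "f (x + s *\<^sub>R d) \<le> (1 - s) * f x + s * f y"
      unfolding eq using s by (intro convex_onD[OF cf]) auto
    have n: "norm (x + s *\<^sub>R d - c)^2 = norm (x - c)^2 + 2 * s * inner (x - c) d + s^2 * norm d ^2"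
      unfolding power2_norm_eq_inner by (simp add: power2_norm_eq_inner inner_add_left inner_add_right inner_diff_left inner_diff_right
          inner_commute algebra_simps power2_eq_square)
    have m': "f x + t/2 * norm (x - c)^2 \<le> f (x + s *\<^sub>R d) + (t/2 * norm (x-c)^2 + t * s * inner (x - c) d + t / 2 * s^2 * norm d ^ 2)"
    proof -
      have "t/2 * (norm (x - c)^2 + 2 * s * inner (x - c) d + s^2 * norm d ^2) = t/2 * norm (x-c)^2 + t * s * inner (x - c) d + t / 2 * s^2 * norm d ^ 2"
        by (simp add: distrib_left)
      then show ?thesis using m[of "x + s *\<^sub>R d"] unfolding n by linarith
    qed
    have c1': "f (x + s *\<^sub>R d) \<le> f x - s * f x + s * f y" using c1 by (simp add: left_diff_distrib)
    have "s * f x \<le> s * f y + t * s * inner (x - c) d + t / 2 * s^2 * norm d ^ 2"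
      using m' c1' by linarith
    then have "s * f x \<le> s * (f y + t * inner (x - c) d + s * (t/2 * norm d ^2))"
      by (simp add: algebra_simps power2_eq_square)
    then show ?thesis using s by simp
  qed
  note h = this
  have "f x \<le> f y + t * inner (x - c) d"
    by (rule small_le[of "t/2 * norm d ^2"]) (use t h in auto)
  then show "f x + inner ((- t) *\<^sub>R (x - c)) (y - x) \<le> f y" by (simp add: d_def)
qed

lemma key_ineq:
  fixes a a0 :: "'z::real_inner" and x x0 e e0 l l0 :: "'e::real_inner"
  assumes "l = l0 + x + e"
    "- t * inner (a - a0) a - inner (l0 + x0 + e0) x \<ge> 0"
    "- inner l e \<ge> 0" "- inner (x + e) (e - e0) \<ge> 0"
  shows "t*norm a^2 - norm x^2 + norm e^2 + norm l^2 + (t*norm (a-a0)^2 - norm (x-x0)^2 + norm (e-e0)^2 + norm (l-l0)^2)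
    \<le> t*norm a0^2 - norm x0^2 + norm e0^2 + norm l0^2"
  using assms
  by (simp add: power2_norm_eq_inner inner_add_left inner_add_right inner_diff_left inner_diff_right
          inner_commute algebra_simps)


lemma sq_to_zero:
  fixes v :: "nat \<Rightarrow> 'a::real_normed_vector"
  assumes "\<And>k. norm (v k)^2 \<le> D k" "D \<longlonglongrightarrow> 0"
  shows "v \<longlonglongrightarrow> 0"
proof -
  have "(\<lambda>k. norm (v k)^2) \<longlonglongrightarrow> 0"
    by (rule tendsto_sandwich[of "\<lambda>_. 0" _ _ D]) (use assms in auto)
  then have "(\<lambda>k. sqrt (norm (v k)^2)) \<longlonglongrightarrow> sqrt 0" by (rule tendsto_real_sqrt)
  then have "(\<lambda>k. norm (v k)) \<longlonglongrightarrow> 0" by simp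
  then show ?thesis by (simp add: tendsto_norm_zero_iff)
qed

lemma norm_triple_sq: "norm (a, b, c)^2 = norm a^2 + norm b^2 + norm c^2"
  by (simp add: norm_Pair)

lemma dec_sub_zero:
  fixes W :: "nat \<Rightarrow> real"
  assumes "\<And>k. W (Suc k) \<le> W k" "\<And>k. 0 \<le> W k" "strict_mono r" "(W \<circ> r) \<longlonglongrightarrow> 0"
  shows "W \<longlonglongrightarrow> 0"
proof -
  have "decseq W" using assms(1) by (simp add: decseq_SucI)
  then obtain l where l: "W \<longlonglongrightarrow> l" using decseq_convergent[of W 0] assms(2) by blast
  then have "(W \<circ> r) \<longlonglongrightarrow> l" using assms(3) by (rule LIMSEQ_subseq_LIMSEQ)
  then have "l = 0" using assms(4) by (rule LIMSEQ_unique)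
  then show ?thesis using l by simp
qed

lemma fejer:
  fixes f :: "'z::euclidean_space \<Rightarrow> real" and g :: "'e::euclidean_space \<Rightarrow> real"
    and L :: "'z \<Rightarrow> 'e" and Lt :: "'e \<Rightarrow> 'z"
    and Z :: "nat \<Rightarrow> 'z" and E lam :: "nat \<Rightarrow> 'e"
  assumes lL: "linear L" and lLt: "linear Lt"
    and adj: "\<And>y z. inner (Lt y) z = inner y (L z)"
    and sol: "- Lt ls \<in> subdiff f Zs" "- ls \<in> subdiff g Es" "L Zs + Es = X"
    and S1: "- t *\<^sub>R (Z (Suc k) - Z k) - Lt (lam k + (L (Z k) + E k - X)) \<in> subdiff f (Z (Suc k))"
    and S2: "- lam k \<in> subdiff g (E k)" "- lam (Suc k) \<in> subdiff g (E (Suc k))"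
    and S3: "lam (Suc k) = lam k + (L (Z (Suc k)) + E (Suc k) - X)"
  shows "t*norm (Z (Suc k) - Zs)^2 - norm (L (Z (Suc k) - Zs))^2 + norm (E (Suc k) - Es)^2 + norm (lam (Suc k) - ls)^2
     + (t*norm (Z (Suc k) - Z k)^2 - norm (L (Z (Suc k) - Z k))^2 + norm (E (Suc k) - E k)^2 + norm (lam (Suc k) - lam k)^2)
     \<le> t*norm (Z k - Zs)^2 - norm (L (Z k - Zs))^2 + norm (E k - Es)^2 + norm (lam k - ls)^2"
proof -
  define a where "a = Z (Suc k) - Zs"
  define a0 where "a0 = Z k - Zs"
  define e where "e = E (Suc k) - Es"
  define e0 where "e0 = E k - Es"
  define l where "l = lam (Suc k) - ls"
  define l0 where "l0 = lam k - ls"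
  have Ld: "L (u - v) = L u - L v" for u v using lL by (rule linear_diff)
  have Ltd: "Lt (u - v) = Lt u - Lt v" for u v using lLt by (rule linear_diff)
  have X: "X = L Zs + Es" using sol(3) by simp
  have h1: "l = l0 + L a + e"
    unfolding l_def l0_def a_def e_def S3 X Ld by (simp add: algebra_simps)
  have m1: "inner ((- t *\<^sub>R (Z (Suc k) - Z k) - Lt (lam k + (L (Z k) + E k - X))) - (- Lt ls)) (Z (Suc k) - Zs) \<ge> 0"
    by (rule subdiff_mono[OF S1 sol(1)])
  have eq1: "(- t *\<^sub>R (Z (Suc k) - Z k) - Lt (lam k + (L (Z k) + E k - X))) - (- Lt ls)
      = - t *\<^sub>R (a - a0) - Lt (l0 + L a0 + e0)"
  proof -
    have arg: "lam k + (L (Z k) + E k - X) - ls = l0 + L a0 + e0"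
      unfolding a0_def l0_def e0_def X Ld by (simp add: algebra_simps)
    have "(- t *\<^sub>R (Z (Suc k) - Z k) - Lt (lam k + (L (Z k) + E k - X))) - (- Lt ls)
      = - t *\<^sub>R (a - a0) - (Lt (lam k + (L (Z k) + E k - X)) - Lt ls)"
      by (simp add: a_def a0_def algebra_simps)
    also have "\<dots> = - t *\<^sub>R (a - a0) - Lt (l0 + L a0 + e0)" unfolding Ltd[symmetric] arg ..
    finally show ?thesis .
  qed
  have i1: "- t * inner (a - a0) a - inner (l0 + L a0 + e0) (L a) \<ge> 0"
    using m1 unfolding eq1 by (simp add: a_def[symmetric] inner_diff_left adj)
  have m2: "inner (- lam (Suc k) - - ls) (E (Suc k) - Es) \<ge> 0" by (rule subdiff_mono[OF S2(2) sol(2)])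
  have i2: "- inner l e \<ge> 0" using m2 unfolding l_def e_def by (simp add: inner_diff_left algebra_simps)
  have m3: "inner (- lam (Suc k) - - lam k) (E (Suc k) - E k) \<ge> 0" by (rule subdiff_mono[OF S2(2) S2(1)])
  have "- lam (Suc k) - - lam k = - (l - l0)" "E (Suc k) - E k = e - e0"
    by (simp_all add: l_def l0_def e_def e0_def)
  then have i3: "- inner (L a + e) (e - e0) \<ge> 0" using m3 h1 by (simp add: inner_diff_left inner_add_left inner_diff_right inner_add_right)
  have K: "t*norm a^2 - norm (L a)^2 + norm e^2 + norm l^2 + (t*norm (a-a0)^2 - norm (L a - L a0)^2 + norm (e-e0)^2 + norm (l-l0)^2)
    \<le> t*norm a0^2 - norm (L a0)^2 + norm e0^2 + norm l0^2"
    by (rule key_ineq[OF h1 i1 i2 i3])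
  have "a - a0 = Z (Suc k) - Z k" "e - e0 = E (Suc k) - E k" "l - l0 = lam (Suc k) - lam k"
    by (simp_all add: a_def a0_def e_def e0_def l_def l0_def)
  moreover have "L a - L a0 = L (Z (Suc k) - Z k)" unfolding Ld[symmetric] a_def a0_def by simp
  ultimately show ?thesis using K by (simp add: a_def a0_def e_def e0_def l_def l0_def)
qed


lemma abstract_conv:
  fixes f :: "'z::euclidean_space \<Rightarrow> real" and g :: "'e::euclidean_space \<Rightarrow> real"
    and L :: "'z \<Rightarrow> 'e" and Lt :: "'e \<Rightarrow> 'z"
    and Z :: "nat \<Rightarrow> 'z" and E lam :: "nat \<Rightarrow> 'e"
  assumes cf: "convex_on UNIV f" and cg: "convex_on UNIV g"
    and lL: "linear L" and lLt: "linear Lt"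
    and adj: "\<And>y z. inner (Lt y) z = inner y (L z)"
    and tb: "\<And>z. norm (L z)^2 + norm z^2 \<le> t * norm z^2"
    and sol: "- Lt ls \<in> subdiff f Zs" "- ls \<in> subdiff g Es" "L Zs + Es = X"
    and S1: "\<And>k. - t *\<^sub>R (Z (Suc k) - Z k) - Lt (lam k + (L (Z k) + E k - X)) \<in> subdiff f (Z (Suc k))"
    and S2: "\<And>k. - lam k \<in> subdiff g (E k)"
    and S3: "\<And>k. lam (Suc k) = lam k + (L (Z (Suc k)) + E (Suc k) - X)"
  shows "\<exists>Zi Ei li. - Lt li \<in> subdiff f Zi \<and> - li \<in> subdiff g Ei \<and> L Zi + Ei = X
     \<and> Z \<longlonglongrightarrow> Zi \<and> E \<longlonglongrightarrow> Ei \<and> lam \<longlonglongrightarrow> li"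
proof -
  have bL: "bounded_linear L" using lL by (simp add: linear_conv_bounded_linear)
  have bLt: "bounded_linear Lt" using lLt by (simp add: linear_conv_bounded_linear)
  have qge: "norm z^2 \<le> t * norm z^2 - norm (L z)^2" for z using tb[of z] by linarith
  define V where "V Zs Es ls k = t*norm (Z k - Zs)^2 - norm (L (Z k - Zs))^2 + norm (E k - Es)^2 + norm (lam k - ls)^2"
    for Zs Es ls k
  define D where "D k = t*norm (Z (Suc k) - Z k)^2 - norm (L (Z (Suc k) - Z k))^2 + norm (E (Suc k) - E k)^2 + norm (lam (Suc k) - lam k)^2"
    for k
  have fej: "V Zs Es ls (Suc k) + D k \<le> V Zs Es ls k"
    if "- Lt ls \<in> subdiff f Zs" "- ls \<in> subdiff g Es" "L Zs + Es = X" for Zs Es ls k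
    unfolding V_def D_def by (rule fejer[OF lL lLt adj that S1[of k] S2[of k] S2[of "Suc k"] S3[of k]])
  have Vlow: "norm (Z k - Zs)^2 + norm (E k - Es)^2 + norm (lam k - ls)^2 \<le> V Zs Es ls k" for Zs Es ls k
    unfolding V_def using qge[of "Z k - Zs"] by linarith
  have Dlow: "norm (Z (Suc k) - Z k)^2 + norm (E (Suc k) - E k)^2 + norm (lam (Suc k) - lam k)^2 \<le> D k" for k
    unfolding D_def using qge[of "Z (Suc k) - Z k"] by linarith
  have V0: "0 \<le> V Zs Es ls k" for Zs Es ls k
    using Vlow[of k Zs Es ls] by (smt (verit) zero_le_power2)
  have D0: "0 \<le> D k" for k
    using Dlow[of k] by (smt (verit) zero_le_power2)
  define V1 where "V1 = V Zs Es ls"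
  have fej1: "V1 (Suc k) + D k \<le> V1 k" for k unfolding V1_def by (rule fej[OF sol])
  have V1dec: "V1 (Suc k) \<le> V1 k" for k using fej1[of k] D0[of k] by linarith
  have V1b: "V1 k \<le> V1 0" for k
  proof (induction k)
    case (Suc k) then show ?case using V1dec[of k] by linarith
  qed simp
  have sumD: "(\<Sum>k\<le>n. D k) + V1 (Suc n) \<le> V1 0" for n
  proof (induction n)
    case 0 then show ?case using fej1[of 0] by simp
  next
    case (Suc n) then show ?case using fej1[of "Suc n"] by simp
  qed
  have "summable D"
  proof (rule bounded_imp_summable[OF D0])
    fix n show "(\<Sum>k\<le>n. D k) \<le> V1 0" using sumD[of n] V0[of Zs Es ls "Suc n"] unfolding V1_def by linarith
  qed
  then have Dlim: "D \<longlonglongrightarrow> 0" by (rule summable_LIMSEQ_zero)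
  have dZ: "(\<lambda>k. Z (Suc k) - Z k) \<longlonglongrightarrow> 0"
    by (rule sq_to_zero[OF _ Dlim]) (use Dlow in \<open>smt (verit) zero_le_power2\<close>)
  have dE: "(\<lambda>k. E (Suc k) - E k) \<longlonglongrightarrow> 0"
    by (rule sq_to_zero[OF _ Dlim]) (use Dlow in \<open>smt (verit) zero_le_power2\<close>)
  have dl: "(\<lambda>k. lam (Suc k) - lam k) \<longlonglongrightarrow> 0"
    by (rule sq_to_zero[OF _ Dlim]) (use Dlow in \<open>smt (verit) zero_le_power2\<close>)
  define u where "u k = (Z k, E k, lam k)" for k
  have ub: "u k \<in> cball (Zs, Es, ls) (sqrt (V1 0))" for k
  proof -
    have "dist (Zs, Es, ls) (u k)^2 = norm (Z k - Zs)^2 + norm (E k - Es)^2 + norm (lam k - ls)^2"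
      by (simp add: u_def dist_norm norm_Pair norm_minus_commute)
    also have "\<dots> \<le> V1 0" using Vlow[of k Zs Es ls] V1b[of k] unfolding V1_def by linarith
    finally show ?thesis by (simp add: real_le_rsqrt)
  qed
  obtain w r where r: "strict_mono r" and wlim: "(u \<circ> r) \<longlonglongrightarrow> w"
  proof -
    have "bounded (range u)" by (rule bounded_subset[OF bounded_cball]) (use ub in auto)
    then show ?thesis using bounded_imp_convergent_subsequence[of u] that by blast
  qed
  obtain Zi Ei li where w: "w = (Zi, Ei, li)" by (cases w) auto
  have Zr: "(\<lambda>k. Z (r k)) \<longlonglongrightarrow> Zi" using tendsto_fst[OF wlim] by (simp add: w u_def o_def)
  have Er: "(\<lambda>k. E (r k)) \<longlonglongrightarrow> Ei" using tendsto_fst[OF tendsto_snd[OF wlim]] by (simp add: w u_def o_def)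
  have lr: "(\<lambda>k. lam (r k)) \<longlonglongrightarrow> li" using tendsto_snd[OF tendsto_snd[OF wlim]] by (simp add: w u_def o_def)
  define h where "h k = L (Z k) + E k - X" for k
  have "(\<lambda>k. h (Suc k)) \<longlonglongrightarrow> 0" using dl by (simp add: h_def S3)
  then have hlim: "h \<longlonglongrightarrow> 0" by (rule LIMSEQ_imp_Suc)
  have hr0: "(\<lambda>k. h (r k)) \<longlonglongrightarrow> 0" using LIMSEQ_subseq_LIMSEQ[OF hlim r] by (simp add: o_def)
  have hr: "(\<lambda>k. h (r k)) \<longlonglongrightarrow> L Zi + Ei - X"
    unfolding h_def by (intro tendsto_intros bounded_linear.tendsto[OF bL] Zr Er)
  have feas: "L Zi + Ei = X" using LIMSEQ_unique[OF hr hr0] by simp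
  have gc: "continuous_on UNIV g" by (rule convex_on_continuous[OF open_UNIV cg])
  have fc: "continuous_on UNIV f" by (rule convex_on_continuous[OF open_UNIV cf])
  have gsub: "- li \<in> subdiff g Ei"
    unfolding subdiff_def
  proof (intro CollectI allI)
    fix y
    have "(\<lambda>k. g (E (r k)) + inner (- lam (r k)) (y - E (r k))) \<longlonglongrightarrow> g Ei + inner (- li) (y - Ei)"
      by (intro tendsto_intros continuous_on_tendsto_compose[OF gc Er]) (auto intro: Er lr)
    moreover have "\<forall>k. g (E (r k)) + inner (- lam (r k)) (y - E (r k)) \<le> g y"
      using S2 by (auto simp: subdiff_def)
    ultimately show "g Ei + inner (- li) (y - Ei) \<le> g y"
      by (intro tendsto_upperbound[of _ _ sequentially]) (auto intro: always_eventually)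
  qed
  have dZr: "(\<lambda>k. Z (Suc (r k)) - Z (r k)) \<longlonglongrightarrow> 0" using LIMSEQ_subseq_LIMSEQ[OF dZ r] by (simp add: o_def)
  have Zr1: "(\<lambda>k. Z (Suc (r k))) \<longlonglongrightarrow> Zi"
  proof -
    have "(\<lambda>k. Z (r k) + (Z (Suc (r k)) - Z (r k))) \<longlonglongrightarrow> Zi + 0" by (intro tendsto_intros Zr dZr)
    then show ?thesis by simp
  qed
  have fsub: "- Lt li \<in> subdiff f Zi"
    unfolding subdiff_def
  proof (intro CollectI allI)
    fix y
    have pl: "(\<lambda>k. - t *\<^sub>R (Z (Suc (r k)) - Z (r k)) - Lt (lam (r k) + h (r k))) \<longlonglongrightarrow> - t *\<^sub>R 0 - Lt (li + 0)"
      by (intro tendsto_intros bounded_linear.tendsto[OF bLt] dZr lr hr0)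
    have "(\<lambda>k. f (Z (Suc (r k))) + inner (- t *\<^sub>R (Z (Suc (r k)) - Z (r k)) - Lt (lam (r k) + h (r k))) (y - Z (Suc (r k))))
       \<longlonglongrightarrow> f Zi + inner (- t *\<^sub>R 0 - Lt (li + 0)) (y - Zi)"
      by (intro tendsto_intros continuous_on_tendsto_compose[OF fc Zr1] pl) (auto intro: Zr1)
    moreover have "\<forall>k. f (Z (Suc (r k))) + inner (- t *\<^sub>R (Z (Suc (r k)) - Z (r k)) - Lt (lam (r k) + h (r k))) (y - Z (Suc (r k))) \<le> f y"
      using S1 by (auto simp: subdiff_def h_def)
    ultimately have "f Zi + inner (- t *\<^sub>R 0 - Lt (li + 0)) (y - Zi) \<le> f y"
      by (intro tendsto_upperbound[of _ _ sequentially]) (auto intro: always_eventually)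
    then show "f Zi + inner (- Lt li) (y - Zi) \<le> f y" by simp
  qed
  define W where "W = V Zi Ei li"
  have Wdec: "W (Suc k) \<le> W k" for k using fej[OF fsub gsub feas, of k] D0[of k] unfolding W_def by linarith
  have W0: "0 \<le> W k" for k unfolding W_def by (rule V0)
  have "(\<lambda>k. t*norm (Z (r k) - Zi)^2 - norm (L (Z (r k) - Zi))^2 + norm (E (r k) - Ei)^2 + norm (lam (r k) - li)^2)
     \<longlonglongrightarrow> t*norm (Zi - Zi)^2 - norm (L (Zi - Zi))^2 + norm (Ei - Ei)^2 + norm (li - li)^2"
    by (intro tendsto_intros bounded_linear.tendsto[OF bL] Zr Er lr)
  then have "(W \<circ> r) \<longlonglongrightarrow> 0"
    using linear_0[OF lL] by (simp add: W_def V_def o_def)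
  then have Wlim: "W \<longlonglongrightarrow> 0" by (rule dec_sub_zero[of W, OF Wdec W0 r])
  have Wl: "norm (Z k - Zi)^2 + norm (E k - Ei)^2 + norm (lam k - li)^2 \<le> W k" for k
    unfolding W_def by (rule Vlow)
  have "(\<lambda>k. Z k - Zi) \<longlonglongrightarrow> 0"
    by (rule sq_to_zero[OF _ Wlim]) (use Wl in \<open>smt (verit) zero_le_power2\<close>)
  then have "(\<lambda>k. (Z k - Zi) + Zi) \<longlonglongrightarrow> 0 + Zi" by (intro tendsto_intros)
  then have cZ: "Z \<longlonglongrightarrow> Zi" by simp
  have "(\<lambda>k. E k - Ei) \<longlonglongrightarrow> 0"
    by (rule sq_to_zero[OF _ Wlim]) (use Wl in \<open>smt (verit) zero_le_power2\<close>)
  then have "(\<lambda>k. (E k - Ei) + Ei) \<longlonglongrightarrow> 0 + Ei" by (intro tendsto_intros)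
  then have cE: "E \<longlonglongrightarrow> Ei" by simp
  have "(\<lambda>k. lam k - li) \<longlonglongrightarrow> 0"
    by (rule sq_to_zero[OF _ Wlim]) (use Wl in \<open>smt (verit) zero_le_power2\<close>)
  then have "(\<lambda>k. (lam k - li) + li) \<longlonglongrightarrow> 0 + li" by (intro tendsto_intros)
  then have cl: "lam \<longlonglongrightarrow> li" by simp
  show ?thesis using fsub gsub feas cZ cE cl by blast
qed


theorem theorem1:
  fixes A :: "real^'d^'m" and X :: "real^'n^'m"
    and f :: "real^'n^'d \<Rightarrow> real" and g :: "real^'n^'m \<Rightarrow> real"
    and c \<sigma> :: real
    and Z0 :: "real^'n^'d" and E0 :: "real^'n^'m" and lam0 :: "real^'n^'m"
  assumes "convex_on UNIV f" and "convex_on UNIV g"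
    and "\<forall>s. 0 \<le> s \<and> s \<le> c \<longrightarrow> S_set s A \<noteq> {}"
    and "Omega_star f g A X \<noteq> {}"
    and "0 \<le> \<sigma>" and "\<sigma> \<le> c"
  shows "\<exists>W \<theta> \<beta>. (\<forall>k. (W k, \<theta> k, \<beta> k) \<in> S_set \<sigma> A) \<and>
     (\<forall>Z E lam. Z 0 = Z0 \<and> E 0 = E0 \<and> lam 0 = lam0 \<and> dladmm_seq f g A X W \<theta> \<beta> Z E lam
        \<longrightarrow> (\<exists>\<omega>\<in>Omega_star f g A X. (\<lambda>k. (Z k, E k, - lam k)) \<longlonglongrightarrow> \<omega>))"
proof -
  note cf = assms(1) and cg = assms(2)
  define L where "L = (\<lambda>Z::real^'n^'d. A ** Z)"
  define Lt where "Lt = (\<lambda>Y::real^'n^'m. transpose A ** Y)"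
  have lL: "linear L" unfolding L_def by (rule mm_linear)
  have lLt: "linear Lt" unfolding Lt_def by (rule mm_linear)
  have adj: "inner (Lt y) z = inner y (L z)" for y z unfolding L_def Lt_def by (rule mm_adj)
  obtain K where K: "\<And>z. norm (L z) \<le> norm z * K" "K > 0"
    using bounded_linear.pos_bounded[OF lL[unfolded linear_conv_bounded_linear]] by blast
  define t where "t = K^2 + 1"
  have t0: "t > 0" unfolding t_def by (simp add: add_nonneg_pos)
  have tb: "norm (L z)^2 + norm z^2 \<le> t * norm z^2" for z
  proof -
    have "norm (L z)^2 \<le> (norm z * K)^2" using K(1)[of z] by (intro power_mono) auto
    then show ?thesis unfolding t_def by (simp add: algebra_simps power_mult_distrib)
  qed
  define \<theta>c :: "real^'n^'d" where "\<theta>c = (\<chi> i j. t)"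
  define \<beta>c :: "real^'n^'m" where "\<beta>c = (\<chi> i j. 1)"
  have inS: "(A, \<theta>c, \<beta>c) \<in> S_set \<sigma> A"
    unfolding S_set_def
  proof (intro CollectI case_prodI conjI allI impI)
    show "spec_norm (A - A) \<le> \<sigma>" using assms(5) by (simp add: spec_norm_def onorm_zero)
    show "0 < \<theta>c $ i $ j" for i j using t0 by (simp add: \<theta>c_def)
    show "0 < \<beta>c $ i $ j" for i j by (simp add: \<beta>c_def)
    fix Z :: "real^'n^'d" assume "Z \<noteq> 0"
    have "inner (hprod \<theta>c Z - transpose A ** hprod \<beta>c (A ** Z)) Z = t * norm Z^2 - norm (L Z)^2"
      unfolding \<theta>c_def \<beta>c_def hprod_const hprod_one
      using adj[of "A ** Z" Z] by (simp add: L_def Lt_def inner_diff_left power2_norm_eq_inner)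
    also have "\<dots> \<ge> norm Z^2" using tb[of Z] by linarith
    finally show "0 < inner (hprod \<theta>c Z - transpose A ** hprod \<beta>c (A ** Z)) Z"
      using \<open>Z \<noteq> 0\<close> by (smt (verit) zero_less_norm_iff zero_less_power)
  qed
  show ?thesis
  proof (intro exI[of _ "\<lambda>_. A"] exI[of _ "\<lambda>_. \<theta>c"] exI[of _ "\<lambda>_. \<beta>c"] conjI allI impI)
    show "(A, \<theta>c, \<beta>c) \<in> S_set \<sigma> A" for k :: nat by (rule inS)
    fix Z :: "nat \<Rightarrow> real^'n^'d" and E lam :: "nat \<Rightarrow> real^'n^'m"
    assume "Z 0 = Z0 \<and> E 0 = E0 \<and> lam 0 = lam0 \<and> dladmm_seq f g A X (\<lambda>_. A) (\<lambda>_. \<theta>c) (\<lambda>_. \<beta>c) Z E lam"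
    then have seq: "dladmm_seq f g A X (\<lambda>_. A) (\<lambda>_. \<theta>c) (\<lambda>_. \<beta>c) Z E lam" by blast
    obtain Zs Es ls where sol: "- Lt ls \<in> subdiff f Zs" "- ls \<in> subdiff g Es" "L Zs + Es = X"
      using assms(4) unfolding Omega_star_def L_def Lt_def by blast
    have hinvt: "hinv \<theta>c = (\<chi> i j. inverse t)" unfolding \<theta>c_def by (rule hinv_const)
    have hinvb: "hinv \<beta>c = \<beta>c" unfolding \<beta>c_def hinv_const by simp
    have S3: "lam (Suc k) = lam k + (L (Z (Suc k)) + E (Suc k) - X)" for k
      using seq unfolding dladmm_seq_def by (simp add: \<beta>c_def hprod_one L_def)
    have S1: "- t *\<^sub>R (Z (Suc k) - Z k) - Lt (lam k + (L (Z k) + E k - X)) \<in> subdiff f (Z (Suc k))" for k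
    proof -
      define G where "G = Lt (lam k + (L (Z k) + E k - X))"
      define cc where "cc = Z k - inverse t *\<^sub>R G"
      have am: "is_argmin (\<lambda>Y. f Y + wsq \<theta>c (Y - Z k + hprod (hinv \<theta>c)
          (transpose A ** (lam k + hprod \<beta>c (A ** Z k + E k - X))))) (Z (Suc k))"
        using seq unfolding dladmm_seq_def by blast
      have "Y - Z k + hprod (hinv \<theta>c) (transpose A ** (lam k + hprod \<beta>c (A ** Z k + E k - X))) = Y - cc" for Y
        unfolding hinvt hprod_const \<beta>c_def hprod_one cc_def G_def L_def Lt_def by simp
      then have "f (Z (Suc k)) + t/2 * norm (Z (Suc k) - cc)^2 \<le> f y + t/2 * norm (y - cc)^2" for y
        using am unfolding is_argmin_def \<theta>c_def wsq_const by metis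
      then have "(- t) *\<^sub>R (Z (Suc k) - cc) \<in> subdiff f (Z (Suc k))"
        by (rule argmin_subdiff[OF cf t0])
      moreover have "(- t) *\<^sub>R (Z (Suc k) - cc) = - t *\<^sub>R (Z (Suc k) - Z k) - G"
        using t0 unfolding cc_def by (simp add: algebra_simps)
      ultimately show ?thesis unfolding G_def by simp
    qed
    have S2: "- lam (Suc k) \<in> subdiff g (E (Suc k))" for k
    proof -
      define cc where "cc = X - A ** Z (Suc k) - lam k"
      have am: "is_argmin (\<lambda>Y. g Y + wsq \<beta>c (Y - X + A ** Z (Suc k) + hprod (hinv \<beta>c) (lam k))) (E (Suc k))"
        using seq unfolding dladmm_seq_def by blast
      have "Y - X + A ** Z (Suc k) + hprod (hinv \<beta>c) (lam k) = Y - cc" for Y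
        by (simp add: cc_def \<beta>c_def hinv_const hprod_one)
      then have "g (E (Suc k)) + 1/2 * norm (E (Suc k) - cc)^2 \<le> g y + 1/2 * norm (y - cc)^2" for y
        using am unfolding is_argmin_def \<beta>c_def wsq_const by metis
      then have "(- 1) *\<^sub>R (E (Suc k) - cc) \<in> subdiff g (E (Suc k))"
        by (rule argmin_subdiff[OF cg zero_less_one])
      moreover have "(- 1) *\<^sub>R (E (Suc k) - cc) = - lam (Suc k)"
        unfolding cc_def S3 L_def by (simp add: algebra_simps)
      ultimately show ?thesis by simp
    qed
    obtain Zi Ei li where res: "- Lt li \<in> subdiff f Zi" "- li \<in> subdiff g Ei" "L Zi + Ei = X"
      "(\<lambda>k. Z (Suc k)) \<longlonglongrightarrow> Zi" "(\<lambda>k. E (Suc k)) \<longlonglongrightarrow> Ei" "(\<lambda>k. lam (Suc k)) \<longlonglongrightarrow> li"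
      using abstract_conv[OF cf cg lL lLt adj tb sol, of "\<lambda>k. Z (Suc k)" "\<lambda>k. lam (Suc k)" "\<lambda>k. E (Suc k)"]
        S1 S2 S3 by blast
    have "(Zi, Ei, - li) \<in> Omega_star f g A X"
      unfolding Omega_star_def using res(1-3) unfolding L_def Lt_def by blast
    moreover have "(\<lambda>k. (Z k, E k, - lam k)) \<longlonglongrightarrow> (Zi, Ei, - li)"
      using res(4-6) by (intro tendsto_intros) (auto intro: LIMSEQ_imp_Suc)
    ultimately show "\<exists>\<omega>\<in>Omega_star f g A X. (\<lambda>k. (Z k, E k, - lam k)) \<longlonglongrightarrow> \<omega>" by blast
  qed
qed

end
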